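(* Let $\rho_2>0$. Let $\{P_t(n)\}_{t\ge0}$, $n\in\mathbb N$, be independent Poisson processes of rate $2\rho_2$; for each $t\ge0$ define $\xi_t(0)=1$, $\xi_t(n+1)=\xi_t(n)+(P_t(n+1)-1)\mathbf 1_{\{n<M_t\}}$, where $M_t=\inf\{n\ge0:\xi_t(n)=0\}\in\mathbb N\cup\{\infty\}$. Let $g_2(s)=\inf\{x\in(0,1): -\log(1-x)/(2\rho_2x)>s\}$ for $s\ge0$. Then $\mathbb P(M_t=\infty)=g_2(t)$ for every $t\ge0$, and $\chi=\inf\{t\ge0: M_t=\infty\}$ is a continuous random variable with distribution function $g_2$. *)

theory Defs
  imports "HOL-Probability.Probability"
begin

definition poisson_process :: "'a measure \<Rightarrow> real \<Rightarrow> (real \<Rightarrow> 'a \<Rightarrow> nat) \<Rightarrow> bool" where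
  "poisson_process M lam N \<longleftrightarrow>
     (\<forall>t. N t \<in> measurable M (count_space UNIV)) \<and>
     (\<forall>\<omega>\<in>space M. N 0 \<omega> = 0 \<and> mono_on {0..} (\<lambda>t. N t \<omega>) \<and>
        (\<forall>t\<ge>0. continuous (at_right t) (\<lambda>s. real (N s \<omega>)))) \<and>
     (\<forall>s t. 0 \<le> s \<longrightarrow> s < t \<longrightarrow>
        distr M (count_space UNIV) (\<lambda>\<omega>. N t \<omega> - N s \<omega>) = measure_pmf (poisson_pmf (lam * (t - s)))) \<and>
     (\<forall>(ts :: nat \<Rightarrow> real) k. 0 \<le> ts 0 \<longrightarrow> (\<forall>i<k. ts i < ts (Suc i)) \<longrightarrow>
        prob_space.indep_vars M (\<lambda>_. count_space UNIV)
          (\<lambda>i \<omega>. N (ts (Suc i)) \<omega> - N (ts i) \<omega>) {..<k})"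

text \<open>The walk xi with steps p(n+1) - 1, started at 1, stopped at its first zero.
  (Guard "xi n \<noteq> 0" coincides with "n < M" since the walk stays at 0 once it hits 0.)\<close>
fun xi :: "(nat \<Rightarrow> nat) \<Rightarrow> nat \<Rightarrow> int" where
  "xi p 0 = 1"
| "xi p (Suc n) = xi p n + (if xi p n \<noteq> 0 then int (p (Suc n)) - 1 else 0)"

definition hitM :: "(nat \<Rightarrow> nat) \<Rightarrow> enat" where
  "hitM p = Inf (enat ` {n. xi p n = 0})"

definition g2 :: "real \<Rightarrow> real \<Rightarrow> real" where
  "g2 rho s = Inf {x \<in> {0<..<1}. - ln (1 - x) / (2 * rho * x) > s}"

end

theory Submission
  imports Defs
begin


fun wk :: "nat \<Rightarrow> nat stream \<Rightarrow> nat \<Rightarrow> nat" where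
  "wk k X 0 = k"
| "wk k X (Suc n) = (if wk k X n = 0 then 0 else wk k X n + X !! n - 1)"

lemma wk_shift: "wk k X (i + m) = wk (wk k X i) (sdrop i X) m"
  by (induction m) (auto simp: sdrop_snth)

lemma sum_stake_Suc: "sum_list (stake (Suc i) X) = sum_list (stake i X) + X !! i"
proof (induction i arbitrary: X)
  case (Suc i)
  have "sum_list (stake (Suc i) (stl X)) = sum_list (stake i (stl X)) + stl X !! i" by (rule Suc.IH)
  then show ?case by (simp only: stake.simps sum_list.Cons snth.simps) (simp add: add.assoc)
qed simp

lemma wk_first: "0 < k \<Longrightarrow> i \<le> k \<Longrightarrow> wk k X i = k - i + sum_list (stake i X)"
proof (induction i)
  case (Suc i)
  then have "wk k X i = k - i + sum_list (stake i X)" by simp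
  moreover have "k - i > 0" using Suc by simp
  ultimately show ?case using Suc by (simp only: sum_stake_Suc wk.simps) auto
qed simp

lemma wk_first_pos: "i < k \<Longrightarrow> wk k X i > 0"
  using wk_first[of k i X] by simp

lemma wk_k: "wk k X k = sum_list (stake k X)"
  by (cases "k = 0") (simp_all add: wk_first)

fun gh :: "nat \<Rightarrow> nat \<Rightarrow> nat stream \<Rightarrow> bool" where
  "gh 0 k X = (k = 0)"
| "gh (Suc n) k X = gh n (sum_list (stake k X)) (sdrop k X)"

lemma gh_imp_wk: "gh n k X \<Longrightarrow> \<exists>m. wk k X m = 0"
proof (induction n arbitrary: k X)
  case 0 then show ?case by (intro exI[of _ 0]) simp
next
  case (Suc n)
  then obtain m where "wk (sum_list (stake k X)) (sdrop k X) m = 0" by auto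
  then have "wk k X (k + m) = 0" by (simp add: wk_shift wk_k)
  then show ?case by blast
qed

lemma wk_imp_gh: "wk k X m = 0 \<Longrightarrow> \<exists>n. gh n k X"
proof (induction m arbitrary: k X rule: less_induct)
  case (less m)
  show ?case
  proof (cases "k = 0")
    case True then show ?thesis by (intro exI[of _ 0]) simp
  next
    case False
    have "k \<le> m" using wk_first_pos[of m k X] less.prems by (cases "m < k") auto
    then have "wk (sum_list (stake k X)) (sdrop k X) (m - k) = 0"
      using less.prems wk_shift[of k X k "m - k"] by (simp add: wk_k)
    moreover have "m - k < m" using False \<open>k \<le> m\<close> by simp
    ultimately obtain n where "gh n (sum_list (stake k X)) (sdrop k X)" using less.IH by blast
    then show ?thesis by (intro exI[of _ "Suc n"]) simp
  qed
qed

lemma gh_mono: "gh n k X \<Longrightarrow> gh (Suc n) k X"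
proof (induction n arbitrary: k X)
  case 0 then show ?case by simp
next
  case (Suc n)
  then have "gh n (sum_list (stake k X)) (sdrop k X)" by simp
  then have "gh (Suc n) (sum_list (stake k X)) (sdrop k X)" by (rule Suc.IH)
  then show ?case by (simp only: gh.simps(2))
qed

lemma gh_mono': "m \<le> n \<Longrightarrow> gh m k X \<Longrightarrow> gh n k X"
proof (induction n)
  case (Suc n) then show ?case using gh_mono by (cases "m = Suc n") (auto simp: le_Suc_eq)
qed simp

lemma gh_measurable[measurable]: "Measurable.pred (stream_space (count_space UNIV)) (gh n k)"
proof (induction n arbitrary: k)
  case 0 then show ?case by simp
next
  case (Suc n)
  have "(\<lambda>X. gh n (sum_list (stake k X)) (sdrop k X)) \<in> measurable (stream_space (count_space UNIV)) (count_space UNIV)"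
    by (rule measurable_compose_countable[where f="\<lambda>i X. gh n i (sdrop k X)"]) (use Suc in auto)
  then show ?case by simp
qed



lemma gh_meas_pmf[measurable]: "Measurable.pred (stream_space (measure_pmf p)) (gh n k)"
  by (subst measurable_cong_sets[OF sets_stream_space_cong[OF sets_measure_pmf_count_space] refl]) (rule gh_measurable)

lemma pgf_poisson:
  assumes lam: "0 < lam" and s: "0 \<le> s"
  shows "(\<integral>\<^sup>+t. ennreal (s^t) \<partial>measure_pmf (poisson_pmf lam)) = ennreal (exp (lam * (s - 1)))"
proof -
  have "(\<lambda>n. (lam * s)^n / fact n) sums exp (lam * s)" using exp_converges[of "lam * s"] by (simp add: divide_inverse_commute)
  then have "(\<lambda>n. exp (-lam) * ((lam * s)^n / fact n)) sums (exp (-lam) * exp (lam * s))"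
    by (rule sums_mult)
  moreover have "exp (-lam) * exp (lam * s) = exp (lam * (s - 1))"
    by (simp add: exp_diff exp_minus field_simps)
  moreover have "\<And>n. exp (-lam) * ((lam * s)^n / fact n) = lam ^ n / fact n * exp (-lam) * s ^ n"
    by (simp add: power_mult_distrib field_simps)
  ultimately have sm: "(\<lambda>n. lam ^ n / fact n * exp (-lam) * s ^ n) sums exp (lam * (s - 1))" by (simp add: mult_ac)
  have "(\<integral>\<^sup>+t. ennreal (s^t) \<partial>measure_pmf (poisson_pmf lam))
      = (\<integral>\<^sup>+t. ennreal (lam ^ t / fact t * exp (-lam) * s ^ t) \<partial>count_space UNIV)"
    using lam s by (simp add: nn_integral_measure_pmf ennreal_mult[symmetric])
  also have "\<dots> = (\<Sum>t. ennreal (lam ^ t / fact t * exp (-lam) * s ^ t))"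
    by (rule nn_integral_count_space_nat)
  also have "\<dots> = ennreal (exp (lam * (s - 1)))"
    using lam s sm by (intro suminf_ennreal_eq) auto
  finally show ?thesis .
qed

definition fgen :: "real \<Rightarrow> real \<Rightarrow> real" where "fgen lam s = exp (lam * (s - 1))"

definition siter :: "real \<Rightarrow> nat \<Rightarrow> real" where "siter lam n = (fgen lam ^^ n) 0"

lemma siter_0[simp]: "siter lam 0 = 0" and siter_Suc: "siter lam (Suc n) = fgen lam (siter lam n)"
  by (simp_all add: siter_def)

lemma siter_nonneg: "0 \<le> siter lam n"
  by (cases n) (simp_all add: siter_Suc fgen_def)

lemma gh_step:
  assumes lam: "0 < lam" and s: "0 \<le> s"
  assumes IH: "\<And>z. emeasure (stream_space (measure_pmf (poisson_pmf lam)))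
       {X \<in> space (stream_space (measure_pmf (poisson_pmf lam))). gh n z X} = ennreal (s ^ z)"
  shows "emeasure (stream_space (measure_pmf (poisson_pmf lam)))
       {X \<in> space (stream_space (measure_pmf (poisson_pmf lam))). gh n (c + sum_list (stake k X)) (sdrop k X)}
       = ennreal (s ^ c * fgen lam s ^ k)"
proof (induction k arbitrary: c)
  case 0 then show ?case using IH[of c] by simp
next
  case (Suc k)
  interpret N: prob_space "measure_pmf (poisson_pmf lam)" by (rule prob_space_measure_pmf)
  let ?S = "stream_space (measure_pmf (poisson_pmf lam))"
  have "emeasure ?S {X \<in> space ?S. gh n (c + sum_list (stake (Suc k) X)) (sdrop (Suc k) X)}
    = (\<integral>\<^sup>+t. emeasure ?S {x\<in>space ?S. t ## x \<in> {X \<in> space ?S. gh n (c + sum_list (stake (Suc k) X)) (sdrop (Suc k) X)}} \<partial>measure_pmf (poisson_pmf lam))"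
    by (rule prob_space.emeasure_stream_space[OF prob_space_measure_pmf]) measurable
  also have "\<dots> = (\<integral>\<^sup>+t. emeasure ?S {x\<in>space ?S. gh n ((c + t) + sum_list (stake k x)) (sdrop k x)} \<partial>measure_pmf (poisson_pmf lam))"
    by (intro nn_integral_cong arg_cong2[where f=emeasure] refl) (auto simp: space_stream_space add.assoc)
  also have "\<dots> = (\<integral>\<^sup>+t. ennreal (s ^ c * fgen lam s ^ k) * ennreal (s ^ t) \<partial>measure_pmf (poisson_pmf lam))"
    using s by (intro nn_integral_cong) (simp add: Suc.IH power_add ennreal_mult[symmetric] fgen_def mult_ac)
  also have "\<dots> = ennreal (s ^ c * fgen lam s ^ k) * ennreal (fgen lam s)"
    using lam s by (simp add: nn_integral_cmult pgf_poisson fgen_def)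
  also have "\<dots> = ennreal (s ^ c * fgen lam s ^ Suc k)"
    using s by (simp add: ennreal_mult[symmetric] fgen_def mult_ac)
  finally show ?case .
qed

lemma gh_prob:
  assumes lam: "0 < lam"
  shows "emeasure (stream_space (measure_pmf (poisson_pmf lam)))
       {X \<in> space (stream_space (measure_pmf (poisson_pmf lam))). gh n k X} = ennreal (siter lam n ^ k)"
proof (induction n arbitrary: k)
  case 0
  interpret S: prob_space "stream_space (measure_pmf (poisson_pmf lam))"
    by (rule prob_space.prob_space_stream_space, rule prob_space_measure_pmf)
  show ?case by (cases "k = 0") (simp_all add: S.emeasure_space_1)
next
  case (Suc n)
  have "emeasure (stream_space (measure_pmf (poisson_pmf lam)))
       {X \<in> space (stream_space (measure_pmf (poisson_pmf lam))). gh n (0 + sum_list (stake k X)) (sdrop k X)}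
       = ennreal (siter lam n ^ 0 * fgen lam (siter lam n) ^ k)"
    by (rule gh_step[OF lam siter_nonneg Suc.IH])
  then show ?case by (simp add: siter_Suc)
qed



lemma exp_gt_lin: "y \<noteq> 0 \<Longrightarrow> 1 + y < exp (y::real)"
  using exp_minus_greater[of "-y"] by simp

lemma exp_strict_conv:
  fixes a b c :: real
  assumes "a < b" "b < c"
  shows "exp b * (c - a) < (c - b) * exp a + (b - a) * exp c"
proof -
  have ea: "exp a = exp b * exp (a - b)" by (simp add: exp_diff)
  have ec: "exp c = exp b * exp (c - b)" by (simp add: exp_diff)
  have 1: "exp b * (1 + (a - b)) < exp a" unfolding ea
    using exp_gt_lin[of "a - b"] assms by (intro mult_strict_left_mono) auto
  have 2: "exp b * (1 + (c - b)) < exp c" unfolding ec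
    using exp_gt_lin[of "c - b"] assms by (intro mult_strict_left_mono) auto
  have "(c - b) * (exp b * (1 + (a - b))) < (c - b) * exp a"
    using 1 assms by (intro mult_strict_left_mono) auto
  moreover have "(b - a) * (exp b * (1 + (c - b))) < (b - a) * exp c"
    using 2 assms by (intro mult_strict_left_mono) auto
  moreover have "(c - b) * (exp b * (1 + (a - b))) + (b - a) * (exp b * (1 + (c - b))) = exp b * (c - a)"
    by (simp add: algebra_simps)
  ultimately show ?thesis by linarith
qed

lemma ln_lt_minus_one: "0 < (w::real) \<Longrightarrow> w \<noteq> 1 \<Longrightarrow> ln w < w - 1"
proof -
  assume a: "0 < w" "w \<noteq> 1"
  have "ln w \<noteq> 0" using a by (metis exp_ln exp_zero)
  then have "1 + ln w < exp (ln w)" by (rule exp_gt_lin)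
  then show ?thesis using a by simp
qed

lemma ln_ratio_mono:
  fixes x y :: real
  assumes "0 < x" "x < y" "y < 1"
  shows "(x / y) * ln (1 - y) < ln (1 - x)"
proof -
  define th where "th = x / y"
  define m where "m = 1 - x"
  have th: "0 < th" "th < 1" using assms by (auto simp: th_def)
  have m: "0 < m" using assms by (simp add: m_def)
  have meq: "m = th * (1 - y) + (1 - th)" using assms by (simp add: th_def m_def field_simps)
  have "(1 - y) / m \<noteq> 1" using assms m by (simp add: m_def)
  then have i1: "ln ((1 - y) / m) < (1 - y) / m - 1" using assms m by (intro ln_lt_minus_one) auto
  have i2: "ln (1 / m) \<le> 1 / m - 1" using m by (intro ln_le_minus_one) auto
  have l1: "ln ((1 - y) / m) = ln (1 - y) - ln m" using assms m by (simp add: ln_div)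
  have l2: "ln (1 / m) = - ln m" using m by (simp add: ln_div)
  have "th * ln ((1 - y) / m) < th * ((1 - y) / m - 1)" using i1 th by simp
  moreover have "(1 - th) * ln (1 / m) \<le> (1 - th) * (1 / m - 1)" using i2 th by (intro mult_left_mono) auto
  moreover have "th * ((1 - y) / m - 1) + (1 - th) * (1 / m - 1) = (th * (1 - y) + (1 - th)) / m - 1"
    using m by (simp add: field_simps)
  moreover have "(th * (1 - y) + (1 - th)) / m - 1 = 0" using m meq by simp
  ultimately have "th * ln ((1 - y) / m) + (1 - th) * ln (1 / m) < 0" by linarith
  then have "th * ln (1 - y) - ln m < 0" unfolding l1 l2 by (simp add: algebra_simps)
  then show ?thesis by (simp add: th_def m_def)
qed

lemma phi_strict_mono:
  fixes x y rho :: real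
  assumes "0 < rho" "0 < x" "x < y" "y < 1"
  shows "- ln (1 - x) / (2 * rho * x) < - ln (1 - y) / (2 * rho * y)"
proof -
  have "(x / y) * ln (1 - y) < ln (1 - x)" using ln_ratio_mono assms by blast
  then have "x * ln (1 - y) < y * ln (1 - x)" using assms by (simp add: field_simps)
  then show ?thesis using assms by (simp add: field_simps)
qed

lemma fgen_mono: "0 \<le> lam \<Longrightarrow> s \<le> s' \<Longrightarrow> fgen lam s \<le> fgen lam s'"
  by (simp add: fgen_def mult_left_mono)

lemma siter_le1: "0 \<le> lam \<Longrightarrow> siter lam n \<le> 1"
  by (induction n) (auto simp: siter_Suc fgen_def mult_nonneg_nonpos)

lemma siter_incr: "0 \<le> lam \<Longrightarrow> siter lam n \<le> siter lam (Suc n)"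
proof (induction n)
  case 0 then show ?case by (simp add: siter_Suc fgen_def)
next
  case (Suc n) then show ?case by (simp add: siter_Suc[of lam "Suc n"] siter_Suc[of lam n] fgen_mono)
qed

lemma siter_incseq: "0 \<le> lam \<Longrightarrow> incseq (siter lam)"
  using siter_incr by (auto intro: incseq_SucI)

lemma siter_conv: "0 \<le> lam \<Longrightarrow> siter lam \<longlonglongrightarrow> (SUP n. siter lam n)"
  by (rule LIMSEQ_incseq_SUP) (auto simp: bdd_above_def siter_le1 siter_incseq intro!: exI[of _ 1])

definition Lx :: "real \<Rightarrow> real" where "Lx lam = (SUP n. siter lam n)"

lemma Lx_lim: "0 \<le> lam \<Longrightarrow> siter lam \<longlonglongrightarrow> Lx lam"
  unfolding Lx_def by (rule siter_conv)

lemma Lx_le1: "0 \<le> lam \<Longrightarrow> Lx lam \<le> 1"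
  using Lx_lim by (rule LIMSEQ_le_const2) (auto simp: siter_le1)

lemma Lx_pos: "0 \<le> lam \<Longrightarrow> 0 < Lx lam"
proof -
  assume l: "0 \<le> lam"
  have "siter lam 1 \<le> Lx lam" using Lx_lim[OF l] siter_incseq[OF l]
    by (intro incseq_le) auto
  moreover have "siter lam 1 > 0" by (simp add: siter_def fgen_def)
  ultimately show ?thesis by linarith
qed

lemma Lx_fix: "0 \<le> lam \<Longrightarrow> fgen lam (Lx lam) = Lx lam"
proof -
  assume l: "0 \<le> lam"
  have "(\<lambda>n. fgen lam (siter lam n)) \<longlonglongrightarrow> fgen lam (Lx lam)"
    unfolding fgen_def by (intro tendsto_intros Lx_lim l)
  moreover have "(\<lambda>n. fgen lam (siter lam n)) \<longlonglongrightarrow> Lx lam"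
    using LIMSEQ_Suc[OF Lx_lim[OF l]] by (simp add: siter_Suc)
  ultimately show ?thesis by (rule LIMSEQ_unique)
qed

lemma Lx_least: "0 \<le> lam \<Longrightarrow> 0 \<le> s \<Longrightarrow> fgen lam s \<le> s \<Longrightarrow> Lx lam \<le> s"
proof -
  assume l: "0 \<le> lam" and s: "0 \<le> s" "fgen lam s \<le> s"
  have "siter lam n \<le> s" for n
  proof (induction n)
    case (Suc n) then show ?case using fgen_mono[OF l Suc] s by (simp add: siter_Suc)
  qed (use s in simp)
  then show ?thesis using Lx_lim[OF l] by (intro LIMSEQ_le_const2) auto
qed

lemma Lx_above: "0 < lam \<Longrightarrow> Lx lam < s \<Longrightarrow> s < 1 \<Longrightarrow> fgen lam s < s"
proof -
  assume l: "0 < lam" and s: "Lx lam < s" "s < 1"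
  let ?L = "Lx lam"
  have "exp (lam * (s - 1)) * (0 - lam * (?L - 1)) < (0 - lam * (s - 1)) * exp (lam * (?L - 1)) + (lam * (s - 1) - lam * (?L - 1)) * exp 0"
    using l s by (intro exp_strict_conv) (auto simp: mult_less_cancel_left_pos intro: mult_pos_neg)
  moreover have "exp (lam * (?L - 1)) = ?L" using Lx_fix[of lam] l by (simp add: fgen_def)
  ultimately have "exp (lam * (s - 1)) * (lam * (1 - ?L)) < lam * ((1 - s) * ?L + (s - ?L))"
    by (simp add: algebra_simps)
  then have "exp (lam * (s - 1)) * (1 - ?L) < (1 - s) * ?L + (s - ?L)"
    using l by (simp add: mult.left_commute[of _ lam])
  also have "(1 - s) * ?L + (s - ?L) = s * (1 - ?L)" by (simp add: algebra_simps)
  finally have "exp (lam * (s - 1)) * (1 - ?L) < s * (1 - ?L)" .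
  moreover have "1 - ?L > 0" using s by simp
  ultimately show ?thesis by (simp add: fgen_def)
qed

lemma g2_eq_Lx:
  assumes rho: "0 < rho" and t: "0 < t"
  shows "g2 rho t = 1 - Lx (2 * rho * t)"
proof -
  let ?lam = "2 * rho * t"
  let ?L = "Lx ?lam"
  have lam: "0 < ?lam" using rho t by simp
  have Lp: "0 < ?L" "?L \<le> 1" using Lx_pos Lx_le1 lam by auto
  have key: "x \<in> {0<..<1} \<and> - ln (1 - x) / (2 * rho * x) > t \<longleftrightarrow> x \<in> {1 - ?L<..<1}" for x
  proof (cases "0 < x \<and> x < 1")
    case True
    have pxr: "0 < 2 * rho * x" using True rho by simp
    have "- ln (1 - x) / (2 * rho * x) > t \<longleftrightarrow> t * (2 * rho * x) < - ln (1 - x)"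
      by (rule pos_less_divide_eq[OF pxr])
    also have "\<dots> \<longleftrightarrow> ln (1 - x) < - ?lam * x" by (auto simp: mult_ac)
    also have "\<dots> \<longleftrightarrow> exp (ln (1 - x)) < exp (- ?lam * x)" by simp
    also have "\<dots> \<longleftrightarrow> 1 - x < fgen ?lam (1 - x)" using True by (simp add: fgen_def)
    also have "\<dots> \<longleftrightarrow> 1 - x < ?L"
    proof
      assume a: "1 - x < fgen ?lam (1 - x)"
      show "1 - x < ?L"
      proof (rule ccontr)
        assume "\<not> 1 - x < ?L"
        then consider "1 - x = ?L" | "?L < 1 - x" by linarith
        then show False
        proof cases
          case 1 then show False using a Lx_fix[of ?lam] lam by simp
        next
          case 2 then show False using a Lx_above[OF lam 2] True by simp
        qed
      qed
    next
      assume a: "1 - x < ?L"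
      show "1 - x < fgen ?lam (1 - x)"
        using Lx_least[of ?lam "1 - x"] lam True a by force
    qed
    finally show ?thesis using True by auto
  next
    case False then show ?thesis using Lp by auto
  qed
  have "g2 rho t = Inf {1 - ?L<..<1}"
    unfolding g2_def by (intro arg_cong[where f=Inf]) (simp only: set_eq_iff mem_Collect_eq key simp_thms)
  also have "\<dots> = 1 - ?L" using Lp by simp
  finally show ?thesis .
qed



definition phi :: "real \<Rightarrow> real \<Rightarrow> real" where "phi rho x = - ln (1 - x) / (2 * rho * x)"
definition SS :: "real \<Rightarrow> real \<Rightarrow> real set" where "SS rho t = {x \<in> {0<..<1}. phi rho x > t}"

lemma g2_SS: "g2 rho t = Inf (SS rho t)"
  by (simp add: g2_def SS_def phi_def)

lemma phi_mono: "0 < rho \<Longrightarrow> 0 < x \<Longrightarrow> x < y \<Longrightarrow> y < 1 \<Longrightarrow> phi rho x < phi rho y"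
  unfolding phi_def by (rule phi_strict_mono)

lemma phi_pos: "0 < rho \<Longrightarrow> 0 < x \<Longrightarrow> x < 1 \<Longrightarrow> 0 < phi rho x"
  unfolding phi_def by (intro divide_pos_pos) auto

lemma SS_ne:
  assumes rho: "0 < rho" shows "SS rho t \<noteq> {}"
proof -
  define K where "K = 2 * rho * \<bar>t\<bar> + 1"
  have "0 \<le> 2 * rho * \<bar>t\<bar>" using rho by simp
  then have K: "0 < K" by (simp add: K_def)
  define x where "x = 1 - exp (- K)"
  have x: "0 < x" "x < 1" using K by (auto simp: x_def)
  have "ln (1 - x) = - K" by (simp add: x_def)
  then have pe: "phi rho x = K / (2 * rho * x)" by (simp add: phi_def)
  have "t < K / (2 * rho)"
  proof -
    have "2 * rho * t \<le> 2 * rho * \<bar>t\<bar>" using rho by (intro mult_left_mono) auto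
    then have "t * (2 * rho) < K" unfolding K_def by (simp add: mult_ac)
    then show ?thesis using rho by (simp add: pos_less_divide_eq)
  qed
  also have "K / (2 * rho) < K / (2 * rho * x)"
    using x rho K by (intro divide_strict_left_mono) (auto simp: mult_less_cancel_left_pos)
  also have "\<dots> = phi rho x" using pe by simp
  finally have "x \<in> SS rho t" using x by (simp add: SS_def)
  then show ?thesis by blast
qed

lemma bdd_SS: "bdd_below (SS rho t)"
  by (rule bdd_belowI[of _ 0]) (simp add: SS_def)

lemma g2_le: "x \<in> SS rho t \<Longrightarrow> g2 rho t \<le> x"
  unfolding g2_SS by (rule cInf_lower[OF _ bdd_SS])

lemma g2_ge: "0 < rho \<Longrightarrow> (\<And>y. y \<in> SS rho t \<Longrightarrow> c \<le> y) \<Longrightarrow> c \<le> g2 rho t"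
  unfolding g2_SS by (rule cInf_greatest[OF SS_ne])

lemma g2_nonneg: "0 < rho \<Longrightarrow> 0 \<le> g2 rho t"
  by (rule g2_ge) (auto simp: SS_def)

lemma g2_le1: "0 < rho \<Longrightarrow> g2 rho t \<le> 1"
proof -
  assume rho: "0 < rho"
  obtain x where hx: "x \<in> SS rho t" using SS_ne[OF rho] by blast
  have "g2 rho t \<le> x" by (rule g2_le[OF hx])
  moreover have "x < 1" using hx by (simp add: SS_def)
  ultimately show ?thesis by simp
qed

lemma g2_mono: "0 < rho \<Longrightarrow> t \<le> t' \<Longrightarrow> g2 rho t \<le> g2 rho t'"
  by (rule g2_ge) (auto simp: SS_def intro!: g2_le)

lemma g2_nonpos: "0 < rho \<Longrightarrow> t \<le> 0 \<Longrightarrow> g2 rho t = 0"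
proof -
  assume rho: "0 < rho" and t: "t \<le> 0"
  have "SS rho t = {0<..<1}" using phi_pos[OF rho] t by (force simp: SS_def)
  then show ?thesis by (simp add: g2_SS)
qed

lemma g2_cont: assumes rho: "0 < rho" shows "isCont (g2 rho) t"
proof -
  have "\<exists>d>0. \<forall>t'. dist t' t < d \<longrightarrow> dist (g2 rho t') (g2 rho t) < e" if e: "0 < e" for e
  proof -
    have "Inf (SS rho t) < g2 rho t + e / 2" using e by (simp add: g2_SS)
    then obtain y where y: "y \<in> SS rho t" "y < g2 rho t + e / 2"
      using cInf_lessD[OF SS_ne[OF rho]] by blast
    define d1 where "d1 = phi rho y - t"
    have d1: "0 < d1" using y by (simp add: SS_def d1_def)
    have right: "g2 rho t' < g2 rho t + e / 2" if "t \<le> t'" "t' < t + d1" for t'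
    proof -
      have "y \<in> SS rho t'" using y that by (auto simp: SS_def d1_def)
      then show ?thesis using g2_le y by fastforce
    qed
    obtain d2 where d2: "0 < d2" and left: "\<And>t'. t' \<le> t \<Longrightarrow> t - d2 < t' \<Longrightarrow> g2 rho t - e / 2 \<le> g2 rho t'"
    proof (cases "g2 rho t \<le> e / 2")
      case True
      show ?thesis
      proof (rule that[of 1])
        fix t' show "g2 rho t - e / 2 \<le> g2 rho t'" using True g2_nonneg[OF rho, of t'] by linarith
      qed simp
    next
      case False
      define x where "x = g2 rho t - e / 2"
      define x' where "x' = g2 rho t - e / 4"
      have x: "0 < x" "x < x'" "x' < 1" "x' < g2 rho t"
        using False e g2_le1[OF rho, of t] by (auto simp: x_def x'_def)
      have "x' \<notin> SS rho t" using g2_le[of x' rho t] x by auto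
      then have px': "phi rho x' \<le> t" using x by (auto simp: SS_def)
      have pxx: "phi rho x < phi rho x'" using phi_mono[OF rho] x by auto
      show ?thesis
      proof (rule that[of "t - phi rho x"])
        show "0 < t - phi rho x" using px' pxx by simp
        fix t' assume t': "t' \<le> t" "t - (t - phi rho x) < t'"
        have "x \<le> y" if "y \<in> SS rho t'" for y
        proof (rule ccontr)
          assume "\<not> x \<le> y"
          then have "phi rho y < phi rho x" using that phi_mono[OF rho, of y x] x by (auto simp: SS_def)
          then show False using that t' by (auto simp: SS_def)
        qed
        then have "x \<le> g2 rho t'" by (intro g2_ge[OF rho])
        then show "g2 rho t - e / 2 \<le> g2 rho t'" by (simp add: x_def)
      qed
    qed
    show ?thesis
    proof (intro exI[of _ "min d1 d2"] conjI allI impI)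
      show "0 < min d1 d2" using d1 d2 by simp
      fix t' assume "dist t' t < min d1 d2"
      then have t': "\<bar>t' - t\<bar> < d1" "\<bar>t' - t\<bar> < d2" by (auto simp: dist_real_def)
      show "dist (g2 rho t') (g2 rho t) < e"
      proof (cases "t \<le> t'")
        case True
        then show ?thesis using right[of t'] t' g2_mono[OF rho True] e by (auto simp: dist_real_def)
      next
        case False
        then show ?thesis using left[of t'] t' g2_mono[OF rho, of t' t] e by (auto simp: dist_real_def)
      qed
    qed
  qed
  then show ?thesis by (simp add: continuous_at_eps_delta)
qed

lemma g2_near1:
  assumes rho: "0 < rho" and e: "0 < e"
  shows "\<exists>T\<ge>0. 1 - e \<le> g2 rho T"
proof (cases "e < 1")
  case False
  then show ?thesis using g2_nonneg[OF rho, of 0] by (intro exI[of _ 0]) auto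
next
  case True
  define x where "x = 1 - e"
  have x: "0 < x" "x < 1" using True e by (auto simp: x_def)
  define T where "T = max (phi rho x) 0"
  have "x \<le> y" if "y \<in> SS rho T" for y
  proof (rule ccontr)
    assume "\<not> x \<le> y"
    then have "phi rho y < phi rho x" using that phi_mono[OF rho, of y x] x by (auto simp: SS_def)
    then show False using that by (auto simp: SS_def T_def)
  qed
  then have "x \<le> g2 rho T" by (intro g2_ge[OF rho])
  then show ?thesis by (intro exI[of _ T]) (auto simp: T_def x_def)
qed



lemma xi_wk: "xi p n = int (wk 1 (to_stream (\<lambda>j. p (Suc j))) n)"
proof (induction n)
  case (Suc n)
  show ?case
  proof (cases "wk 1 (to_stream (\<lambda>j. p (Suc j))) n = 0")
    case True then show ?thesis using Suc by simp
  next
    case False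
    then show ?thesis using Suc by (simp add: to_stream_def of_nat_diff)
  qed
qed simp

lemma hitM_inf: "hitM p = \<infinity> \<longleftrightarrow> (\<forall>n. xi p n \<noteq> 0)"
proof
  assume h: "hitM p = \<infinity>"
  show "\<forall>n. xi p n \<noteq> 0"
  proof (intro allI notI)
    fix n assume "xi p n = 0"
    then have "hitM p \<le> enat n" unfolding hitM_def by (intro Inf_lower) auto
    then show False using h by simp
  qed
next
  assume "\<forall>n. xi p n \<noteq> 0"
  then have "{n. xi p n = 0} = {}" by auto
  then show "hitM p = \<infinity>" by (simp add: hitM_def top_enat_def)
qed

lemma surv_iff: "hitM p = \<infinity> \<longleftrightarrow> \<not> (\<exists>n. gh n 1 (to_stream (\<lambda>j. p (Suc j))))"
proof -
  have "hitM p = \<infinity> \<longleftrightarrow> (\<forall>n. wk 1 (to_stream (\<lambda>j. p (Suc j))) n \<noteq> 0)"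
    unfolding hitM_inf xi_wk by simp
  also have "\<dots> \<longleftrightarrow> \<not> (\<exists>n. gh n 1 (to_stream (\<lambda>j. p (Suc j))))"
    using gh_imp_wk wk_imp_gh by blast
  finally show ?thesis .
qed

locale setting = prob_space M for M :: "'a measure" +
  fixes rho :: real and P :: "nat \<Rightarrow> real \<Rightarrow> 'a \<Rightarrow> nat"
  assumes rho: "0 < rho"
    and pp: "\<And>n. poisson_process M (2 * rho) (P n)"
    and ind: "indep_vars (\<lambda>_. Pi\<^sub>M UNIV (\<lambda>_. count_space UNIV)) (\<lambda>n \<omega>. (\<lambda>t. P n t \<omega>)) UNIV"
begin

lemma P_meas[measurable]: "P n t \<in> measurable M (count_space UNIV)"
  using pp[of n] by (simp add: poisson_process_def)

lemma P_zero: "\<omega> \<in> space M \<Longrightarrow> P n 0 \<omega> = 0"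
  using pp[of n] by (simp add: poisson_process_def)

lemma P_mono: "\<omega> \<in> space M \<Longrightarrow> 0 \<le> s \<Longrightarrow> s \<le> t \<Longrightarrow> P n s \<omega> \<le> P n t \<omega>"
  using pp[of n] unfolding poisson_process_def mono_on_def by auto

lemma P_distr: "0 < t \<Longrightarrow> distr M (count_space UNIV) (P n t) = measure_pmf (poisson_pmf (2 * rho * t))"
proof -
  assume t: "0 < t"
  have "distr M (count_space UNIV) (\<lambda>\<omega>. P n t \<omega> - P n 0 \<omega>) = measure_pmf (poisson_pmf (2 * rho * (t - 0)))"
    using pp[of n] t unfolding poisson_process_def by blast
  moreover have "distr M (count_space UNIV) (\<lambda>\<omega>. P n t \<omega> - P n 0 \<omega>) = distr M (count_space UNIV) (P n t)"
    by (intro distr_cong) (auto simp: P_zero)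
  ultimately show ?thesis by simp
qed

lemma P_prob: "0 < t \<Longrightarrow> prob (P n t -` F \<inter> space M) = measure (measure_pmf (poisson_pmf (2 * rho * t))) F"
proof -
  assume t: "0 < t"
  have "measure (distr M (count_space UNIV) (P n t)) F = prob (P n t -` F \<inter> space M)"
    by (rule measure_distr) auto
  then show ?thesis using P_distr[OF t] by simp
qed

lemma P_indep: "indep_vars (\<lambda>_. count_space UNIV) (\<lambda>n \<omega>. P n t \<omega>) UNIV"
  using indep_vars_compose2[OF ind, of "\<lambda>_ f. f t" "\<lambda>_. count_space UNIV"] by simp

lemma Psuc_meas_pmf: "(\<lambda>\<omega> n. P (Suc n) t \<omega>) \<in> measurable M (Pi\<^sub>M UNIV (\<lambda>_. measure_pmf q))"
proof (rule measurable_PiM_single')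
  fix i :: nat
  show "P (Suc i) t \<in> measurable M (measure_pmf q)"
    by (subst measurable_cong_sets[OF refl sets_measure_pmf_count_space]) (rule P_meas)
qed simp

lemma Psuc_meas_cnt[measurable]: "(\<lambda>\<omega>. to_stream (\<lambda>n. P (Suc n) t \<omega>)) \<in> measurable M (stream_space (count_space UNIV))"
proof -
  have "(\<lambda>\<omega> n. P (Suc n) t \<omega>) \<in> measurable M (Pi\<^sub>M UNIV (\<lambda>_. count_space UNIV))"
    by (rule measurable_PiM_single') auto
  then show ?thesis using measurable_to_stream by (rule measurable_compose)
qed

lemma prod_eq:
  assumes t: "0 < t"
  shows "distr M (Pi\<^sub>M UNIV (\<lambda>_. measure_pmf (poisson_pmf (2 * rho * t)))) (\<lambda>\<omega> n. P (Suc n) t \<omega>)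
         = Pi\<^sub>M UNIV (\<lambda>_. measure_pmf (poisson_pmf (2 * rho * t)))"
proof -
  let ?N = "measure_pmf (poisson_pmf (2 * rho * t))"
  interpret N: prob_space ?N by (rule prob_space_measure_pmf)
  interpret PP: product_prob_space "\<lambda>_. ?N" UNIV ..
  let ?f = "\<lambda>\<omega> n. P (Suc n) t \<omega>"
  have meas: "?f \<in> measurable M (Pi\<^sub>M UNIV (\<lambda>_. ?N))" by (rule Psuc_meas_pmf)
  show ?thesis
  proof (rule PP.PiM_eq)
    show "sets (distr M (Pi\<^sub>M UNIV (\<lambda>_. ?N)) ?f) = sets (Pi\<^sub>M UNIV (\<lambda>_. ?N))" by simp
    fix J :: "nat set" and F assume J: "finite J" "J \<subseteq> UNIV" "\<And>j. j \<in> J \<Longrightarrow> F j \<in> sets ?N"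
    have "emeasure (distr M (Pi\<^sub>M UNIV (\<lambda>_. ?N)) ?f) (prod_emb UNIV (\<lambda>_. ?N) J (Pi\<^sub>E J F))
        = emeasure M (?f -` prod_emb UNIV (\<lambda>_. ?N) J (Pi\<^sub>E J F) \<inter> space M)"
      by (rule emeasure_distr[OF meas]) (use J in \<open>auto intro!: sets_PiM_I\<close>)
    also have "\<dots> = (\<Prod>j\<in>J. emeasure ?N (F j))"
    proof (cases "J = {}")
      case True
      then have "?f -` prod_emb UNIV (\<lambda>_. ?N) J (Pi\<^sub>E J F) \<inter> space M = space M"
        by (auto simp: prod_emb_iff fun_eq_iff)
      then show ?thesis using True by (simp add: emeasure_space_1)
    next
      case False
      have eq: "?f -` prod_emb UNIV (\<lambda>_. ?N) J (Pi\<^sub>E J F) \<inter> space M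
          = (\<Inter>i\<in>Suc ` J. P i t -` F (i - 1) \<inter> space M)"
        using False by (auto simp: prod_emb_iff PiE_def extensional_def Pi_iff)
      have ind': "indep_vars (\<lambda>_. count_space UNIV) (\<lambda>n \<omega>. P n t \<omega>) (Suc ` J)"
        by (rule indep_vars_subset[OF P_indep]) auto
      have "prob (\<Inter>i\<in>Suc ` J. P i t -` F (i - 1) \<inter> space M) = (\<Prod>i\<in>Suc ` J. prob (P i t -` F (i - 1) \<inter> space M))"
        using indep_varsD_finite[OF ind', of "\<lambda>i. F (i - 1)"] False J by auto
      also have "\<dots> = (\<Prod>j\<in>J. prob (P (Suc j) t -` F j \<inter> space M))"
        by (subst prod.reindex) auto
      also have "\<dots> = (\<Prod>j\<in>J. measure ?N (F j))"
        using P_prob[OF t] by simp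
      finally have "emeasure M (?f -` prod_emb UNIV (\<lambda>_. ?N) J (Pi\<^sub>E J F) \<inter> space M) = ennreal (\<Prod>j\<in>J. measure ?N (F j))"
        unfolding eq by (simp add: emeasure_eq_measure)
      also have "\<dots> = (\<Prod>j\<in>J. ennreal (measure ?N (F j)))"
        by (rule prod_ennreal[symmetric]) auto
      also have "\<dots> = (\<Prod>j\<in>J. emeasure ?N (F j))"
        by (simp add: measure_pmf.emeasure_eq_measure)
      finally show ?thesis .
    qed
    finally show "emeasure (distr M (Pi\<^sub>M UNIV (\<lambda>_. ?N)) ?f) (prod_emb UNIV (\<lambda>_. ?N) J (Pi\<^sub>E J F)) = (\<Prod>j\<in>J. emeasure ?N (F j))" .
  qed
qed

lemma stream_eq:
  assumes t: "0 < t"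
  shows "distr M (stream_space (measure_pmf (poisson_pmf (2 * rho * t)))) (\<lambda>\<omega>. to_stream (\<lambda>n. P (Suc n) t \<omega>))
         = stream_space (measure_pmf (poisson_pmf (2 * rho * t)))"
proof -
  let ?N = "measure_pmf (poisson_pmf (2 * rho * t))"
  let ?f = "\<lambda>\<omega> n. P (Suc n) t \<omega>"
  have "stream_space ?N = distr (distr M (Pi\<^sub>M UNIV (\<lambda>_. ?N)) ?f) (stream_space ?N) to_stream"
    by (subst prod_eq[OF t]) (rule stream_space_eq_distr)
  also have "\<dots> = distr M (stream_space ?N) (to_stream \<circ> ?f)"
    by (rule distr_distr[OF measurable_to_stream Psuc_meas_pmf])
  finally show ?thesis by (simp add: comp_def)
qed

lemma surv_sets[measurable]: "{\<omega> \<in> space M. hitM (\<lambda>n. P n t \<omega>) = \<infinity>} \<in> sets M"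
proof -
  have "{\<omega> \<in> space M. hitM (\<lambda>n. P n t \<omega>) = \<infinity>} = {\<omega> \<in> space M. \<not> (\<exists>n. gh n 1 (to_stream (\<lambda>j. P (Suc j) t \<omega>)))}"
    by (simp add: surv_iff)
  also have "\<dots> \<in> sets M" by measurable
  finally show ?thesis .
qed

lemma surv_prob_pos:
  assumes t: "0 < t"
  shows "prob {\<omega> \<in> space M. hitM (\<lambda>n. P n t \<omega>) = \<infinity>} = g2 rho t"
proof -
  let ?lam = "2 * rho * t"
  have lam: "0 < ?lam" using rho t by simp
  let ?N = "measure_pmf (poisson_pmf ?lam)"
  let ?S = "stream_space ?N"
  let ?Phi = "\<lambda>\<omega>. to_stream (\<lambda>n. P (Suc n) t \<omega>)"
  interpret S: prob_space ?S by (rule prob_space.prob_space_stream_space[OF prob_space_measure_pmf])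
  have Phi: "?Phi \<in> measurable M ?S"
    using Psuc_meas_pmf measurable_to_stream by (rule measurable_compose)
  define A where "A n = {X \<in> space ?S. gh n 1 X}" for n
  have A: "A n \<in> sets ?S" for n unfolding A_def by measurable
  have mA: "S.prob (A n) = siter ?lam n" for n
    using gh_prob[OF lam, of n 1] siter_nonneg[of ?lam n] by (simp add: A_def S.emeasure_eq_measure)
  have "(\<lambda>n. S.prob (A n)) \<longlonglongrightarrow> S.prob (\<Union>n. A n)"
    by (rule S.finite_Lim_measure_incseq) (auto simp: A incseq_def A_def intro: gh_mono')
  then have "siter ?lam \<longlonglongrightarrow> S.prob (\<Union>n. A n)" by (simp add: mA)
  then have U: "S.prob (\<Union>n. A n) = Lx ?lam" using Lx_lim[of ?lam] lam by (intro LIMSEQ_unique) auto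
  have "{\<omega> \<in> space M. hitM (\<lambda>n. P n t \<omega>) = \<infinity>} = ?Phi -` (space ?S - (\<Union>n. A n)) \<inter> space M"
    by (auto simp: surv_iff A_def space_stream_space)
  then have "prob {\<omega> \<in> space M. hitM (\<lambda>n. P n t \<omega>) = \<infinity>} = measure (distr M ?S ?Phi) (space ?S - (\<Union>n. A n))"
    using A by (simp add: measure_distr[OF Phi])
  also have "\<dots> = S.prob (space ?S - (\<Union>n. A n))" by (simp add: stream_eq[OF t])
  also have "\<dots> = 1 - Lx ?lam" using A U by (subst S.prob_compl) auto
  also have "\<dots> = g2 rho t" using g2_eq_Lx[OF rho t] by simp
  finally show ?thesis .
qed

lemma surv_prob:
  assumes t: "0 \<le> t"
  shows "prob {\<omega> \<in> space M. hitM (\<lambda>n. P n t \<omega>) = \<infinity>} = g2 rho t"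
proof (cases "t = 0")
  case True
  have E: "{\<omega> \<in> space M. hitM (\<lambda>n. P n t \<omega>) = \<infinity>} = {}"
  proof -
    have "\<not> hitM (\<lambda>n. P n 0 \<omega>) = \<infinity>" if "\<omega> \<in> space M" for \<omega>
      unfolding hitM_inf using that by (auto simp: P_zero intro!: exI[of _ 1])
    then show ?thesis using True by auto
  qed
  have "prob {\<omega> \<in> space M. hitM (\<lambda>n. P n t \<omega>) = \<infinity>} = prob {}" by (simp only: E)
  then show ?thesis using True g2_nonpos[OF rho, of 0] by simp
next
  case False
  then show ?thesis using surv_prob_pos t by simp
qed

end



lemma xi_nonneg: "0 \<le> xi p n"
  by (induction n) auto

lemma xi_mono:
  assumes le: "\<And>n. p n \<le> p' n" and nz: "\<forall>n. xi p n \<noteq> 0"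
  shows "xi p n \<le> xi p' n"
proof (induction n)
  case (Suc n)
  have "xi p n \<ge> 1" using nz xi_nonneg[of p n] by (metis int_one_le_iff_zero_less order_le_less)
  then have "xi p' n \<ge> 1" using Suc by simp
  then show ?case using Suc \<open>xi p n \<ge> 1\<close> le[of "Suc n"] by simp
qed simp

lemma surv_mono_gen:
  assumes le: "\<And>n. p n \<le> p' n" and h: "hitM p = \<infinity>"
  shows "hitM p' = \<infinity>"
proof -
  have nz: "\<forall>n. xi p n \<noteq> 0" using h by (simp add: hitM_inf)
  have "xi p' n \<noteq> 0" for n
  proof -
    have "xi p n \<ge> 1" using nz xi_nonneg[of p n] by (metis int_one_le_iff_zero_less order_le_less)
    then show ?thesis using xi_mono[OF le nz, of n] by simp
  qed
  then show ?thesis by (simp add: hitM_inf)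
qed

context setting
begin

lemma surv_pred[measurable]: "Measurable.pred M (\<lambda>\<omega>. hitM (\<lambda>n. P n t \<omega>) = \<infinity>)"
  unfolding pred_def by (rule surv_sets)

lemma surv_mono: "\<omega> \<in> space M \<Longrightarrow> 0 \<le> s \<Longrightarrow> s \<le> t \<Longrightarrow> hitM (\<lambda>n. P n s \<omega>) = \<infinity> \<Longrightarrow> hitM (\<lambda>n. P n t \<omega>) = \<infinity>"
  by (rule surv_mono_gen[of "\<lambda>n. P n s \<omega>"]) (auto intro: P_mono)

definition chi' :: "'a \<Rightarrow> ereal" where
  "chi' \<omega> = Inf {ereal t | t. t \<ge> 0 \<and> hitM (\<lambda>n. P n t \<omega>) = \<infinity>}"

lemma chi_nonneg: "0 \<le> chi' \<omega>"
  unfolding chi'_def by (rule Inf_greatest) auto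

lemma chi_le_surv: "0 \<le> t \<Longrightarrow> hitM (\<lambda>n. P n t \<omega>) = \<infinity> \<Longrightarrow> chi' \<omega> \<le> ereal t"
  unfolding chi'_def by (rule Inf_lower) auto

lemma chi_le_iff:
  assumes \<omega>: "\<omega> \<in> space M" and a: "0 \<le> a"
  shows "chi' \<omega> \<le> ereal a \<longleftrightarrow> (\<forall>k. hitM (\<lambda>n. P n (a + inverse (real (Suc k))) \<omega>) = \<infinity>)"
proof
  assume c: "chi' \<omega> \<le> ereal a"
  show "\<forall>k. hitM (\<lambda>n. P n (a + inverse (real (Suc k))) \<omega>) = \<infinity>"
  proof
    fix k
    have "chi' \<omega> < ereal (a + inverse (real (Suc k)))"
      using c by (rule le_less_trans) simp
    then obtain x where "x \<in> {ereal t | t. t \<ge> 0 \<and> hitM (\<lambda>n. P n t \<omega>) = \<infinity>}" "x < ereal (a + inverse (real (Suc k)))"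
      unfolding chi'_def Inf_less_iff by blast
    then obtain s where s: "0 \<le> s" "hitM (\<lambda>n. P n s \<omega>) = \<infinity>" "s < a + inverse (real (Suc k))" by auto
    show "hitM (\<lambda>n. P n (a + inverse (real (Suc k))) \<omega>) = \<infinity>"
      by (rule surv_mono[OF \<omega> s(1) _ s(2)]) (use s in simp)
  qed
next
  assume h: "\<forall>k. hitM (\<lambda>n. P n (a + inverse (real (Suc k))) \<omega>) = \<infinity>"
  have le: "chi' \<omega> \<le> ereal (a + inverse (real (Suc k)))" for k
    using h a by (intro chi_le_surv) (auto intro: add_nonneg_nonneg)
  show "chi' \<omega> \<le> ereal a"
  proof (rule ccontr)
    assume "\<not> chi' \<omega> \<le> ereal a"
    then have lt: "ereal a < chi' \<omega>" by simp
    show False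
    proof (cases "chi' \<omega>")
      case (real c)
      then have "0 < c - a" using lt by simp
      then obtain k where k: "inverse (real (Suc k)) < c - a" using reals_Archimedean by blast
      have "c \<le> a + inverse (real (Suc k))" using le[of k] real by simp
      then show False using k by simp
    next
      case PInf then show False using le[of 0] by simp
    next
      case MInf then show False using chi_nonneg[of \<omega>] by simp
    qed
  qed
qed

lemma chi_le_set:
  "{\<omega> \<in> space M. chi' \<omega> \<le> ereal a} =
    (if 0 \<le> a then (\<Inter>k. {\<omega> \<in> space M. hitM (\<lambda>n. P n (a + inverse (real (Suc k))) \<omega>) = \<infinity>}) else {})"
proof (cases "0 \<le> a")
  case True then show ?thesis using chi_le_iff by auto
next
  case False
  have "\<not> chi' \<omega> \<le> ereal a" for \<omega>
  proof
    assume "chi' \<omega> \<le> ereal a"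
    then have "0 \<le> ereal a" using chi_nonneg[of \<omega>] by (rule order.trans[rotated])
    then show False using False by simp
  qed
  then show ?thesis using False by auto
qed

lemma chi_le_sets[measurable]: "{\<omega> \<in> space M. chi' \<omega> \<le> ereal a} \<in> sets M"
  unfolding chi_le_set by (auto intro!: sets.countable_INT)

lemma chi_meas[measurable]: "chi' \<in> borel_measurable M"
proof (rule borel_measurableI_le)
  fix y :: ereal
  show "{\<omega> \<in> space M. chi' \<omega> \<le> y} \<in> sets M"
  proof (cases y)
    case (real a) then show ?thesis using chi_le_sets by simp
  next
    case PInf then show ?thesis by simp
  next
    case MInf
    have E: "{\<omega> \<in> space M. chi' \<omega> \<le> y} = {}" using MInf chi_nonneg by (auto simp: order.antisym)
    show ?thesis unfolding E by simp
  qed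
qed

lemma chi_cdf: "prob {\<omega> \<in> space M. chi' \<omega> \<le> ereal a} = g2 rho a"
proof (cases "0 \<le> a")
  case False
  then have E: "{\<omega> \<in> space M. chi' \<omega> \<le> ereal a} = {}" by (simp only: chi_le_set if_False)
  have "prob {\<omega> \<in> space M. chi' \<omega> \<le> ereal a} = prob {}" by (simp only: E)
  then show ?thesis using g2_nonpos[OF rho, of a] False by simp
next
  case True
  define B where "B k = {\<omega> \<in> space M. hitM (\<lambda>n. P n (a + inverse (real (Suc k))) \<omega>) = \<infinity>}" for k
  have B: "B k \<in> sets M" for k unfolding B_def by (rule surv_sets)
  have dec: "decseq B"
  proof (rule decseq_SucI)
    fix k
    show "B (Suc k) \<subseteq> B k"
    proof
      fix \<omega> assume w: "\<omega> \<in> B (Suc k)"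
      then have w1: "\<omega> \<in> space M" and w2: "hitM (\<lambda>n. P n (a + inverse (real (Suc (Suc k)))) \<omega>) = \<infinity>"
        by (simp_all add: B_def)
      have i: "inverse (real (Suc (Suc k))) \<le> inverse (real (Suc k))"
        by (rule le_imp_inverse_le) auto
      have "0 \<le> a + inverse (real (Suc (Suc k)))" using True by (intro add_nonneg_nonneg) auto
      from surv_mono[OF w1 this _ w2] i have "hitM (\<lambda>n. P n (a + inverse (real (Suc k))) \<omega>) = \<infinity>"
        by simp
      then show "\<omega> \<in> B k" using w1 by (simp add: B_def)
    qed
  qed
  have "(\<lambda>k. prob (B k)) \<longlonglongrightarrow> prob (\<Inter>k. B k)"
    by (rule finite_Lim_measure_decseq) (use B dec in blast)+
  moreover have "prob (B k) = g2 rho (a + inverse (real (Suc k)))" for k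
  proof -
    have "0 \<le> a + inverse (real (Suc k))" using True by (intro add_nonneg_nonneg) auto
    then show ?thesis unfolding B_def by (rule surv_prob)
  qed
  ultimately have l1: "(\<lambda>k. g2 rho (a + inverse (real (Suc k)))) \<longlonglongrightarrow> prob (\<Inter>k. B k)" by simp
  have "(\<lambda>k. a + inverse (real (Suc k))) \<longlonglongrightarrow> a + 0"
    by (intro tendsto_add tendsto_const LIMSEQ_inverse_real_of_nat)
  then have "(\<lambda>k. a + inverse (real (Suc k))) \<longlonglongrightarrow> a" by simp
  then have "(\<lambda>k. g2 rho (a + inverse (real (Suc k)))) \<longlonglongrightarrow> g2 rho a"
    using g2_cont[OF rho, of a] by (rule isCont_tendsto_compose[rotated])
  then have pe: "prob (\<Inter>k. B k) = g2 rho a" using l1 by (rule LIMSEQ_unique[rotated])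
  have E: "{\<omega> \<in> space M. chi' \<omega> \<le> ereal a} = (\<Inter>k. B k)"
    unfolding B_def by (simp only: chi_le_set True if_True)
  have "prob {\<omega> \<in> space M. chi' \<omega> \<le> ereal a} = prob (\<Inter>k. B k)" by (simp only: E)
  then show ?thesis using pe by simp
qed

lemma chi_inf_null: "prob {\<omega> \<in> space M. chi' \<omega> = \<infinity>} = 0"
proof -
  let ?A = "{\<omega> \<in> space M. chi' \<omega> = \<infinity>}"
  have A: "?A \<in> sets M" by measurable
  have "prob ?A \<le> 0 + e" if e: "0 < e" for e
  proof -
    obtain T where T: "0 \<le> T" "1 - e \<le> g2 rho T" using g2_near1[OF rho e] by blast
    have "?A \<subseteq> space M - {\<omega> \<in> space M. hitM (\<lambda>n. P n T \<omega>) = \<infinity>}"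
    proof safe
      fix \<omega> assume "chi' \<omega> = \<infinity>" "hitM (\<lambda>n. P n T \<omega>) = \<infinity>"
      then show False using chi_le_surv[OF T(1), of \<omega>] by simp
    qed
    then have "prob ?A \<le> prob (space M - {\<omega> \<in> space M. hitM (\<lambda>n. P n T \<omega>) = \<infinity>})"
      by (intro finite_measure_mono) auto
    also have "\<dots> = 1 - g2 rho T" using surv_prob[OF T(1)] by (subst prob_compl) auto
    finally show ?thesis using T by simp
  qed
  then have "prob ?A \<le> 0" by (rule field_le_epsilon)
  then show ?thesis using measure_nonneg[of M ?A] by linarith
qed

lemma chi_AE: "AE \<omega> in M. chi' \<omega> \<noteq> \<infinity>"
proof (rule AE_I')
  show "{\<omega> \<in> space M. chi' \<omega> = \<infinity>} \<in> null_sets M"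
    using chi_inf_null by (intro null_setsI) (auto simp: emeasure_eq_measure)
qed auto

lemma chi_atom: "prob {\<omega> \<in> space M. chi' \<omega> = x} = 0"
proof (cases x)
  case PInf then show ?thesis using chi_inf_null by simp
next
  case MInf
  have E: "{\<omega> \<in> space M. chi' \<omega> = x} = {}" using MInf chi_nonneg by auto
  show ?thesis unfolding E by simp
next
  case (real r)
  let ?A = "{\<omega> \<in> space M. chi' \<omega> = x}"
  have A: "?A \<in> sets M" by measurable
  have bnd: "prob ?A \<le> g2 rho r - g2 rho (r - inverse (real (Suc k)))" for k
  proof -
    let ?s = "r - inverse (real (Suc k))"
    have sub: "?A \<subseteq> {\<omega> \<in> space M. chi' \<omega> \<le> ereal r} - {\<omega> \<in> space M. chi' \<omega> \<le> ereal ?s}"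
      using real by auto
    have sub2: "{\<omega> \<in> space M. chi' \<omega> \<le> ereal ?s} \<subseteq> {\<omega> \<in> space M. chi' \<omega> \<le> ereal r}"
      by (auto elim!: order.trans)
    have "prob ?A \<le> prob ({\<omega> \<in> space M. chi' \<omega> \<le> ereal r} - {\<omega> \<in> space M. chi' \<omega> \<le> ereal ?s})"
      using sub by (intro finite_measure_mono) auto
    also have "\<dots> = g2 rho r - g2 rho ?s"
      using sub2 by (subst finite_measure_Diff) (auto simp: chi_cdf)
    finally show ?thesis .
  qed
  have "(\<lambda>k. r - inverse (real (Suc k))) \<longlonglongrightarrow> r - 0"
    by (intro tendsto_diff tendsto_const LIMSEQ_inverse_real_of_nat)
  then have "(\<lambda>k. r - inverse (real (Suc k))) \<longlonglongrightarrow> r" by simp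
  then have "(\<lambda>k. g2 rho (r - inverse (real (Suc k)))) \<longlonglongrightarrow> g2 rho r"
    using g2_cont[OF rho, of r] by (rule isCont_tendsto_compose[rotated])
  then have "(\<lambda>k. g2 rho r - g2 rho (r - inverse (real (Suc k)))) \<longlonglongrightarrow> g2 rho r - g2 rho r"
    by (intro tendsto_diff tendsto_const)
  then have "prob ?A \<le> 0" using bnd by (intro LIMSEQ_le_const) auto
  then show ?thesis using measure_nonneg[of M ?A] by linarith
qed

end

theorem lemma7p1:
  fixes M :: "'a measure" and rho :: real and P :: "nat \<Rightarrow> real \<Rightarrow> 'a \<Rightarrow> nat"
    and chi :: "'a \<Rightarrow> ereal"
  assumes "prob_space M"
    and "rho > 0"
    and "\<And>n. poisson_process M (2 * rho) (P n)"
    and "prob_space.indep_vars M (\<lambda>_. Pi\<^sub>M UNIV (\<lambda>_. count_space UNIV))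
           (\<lambda>n \<omega>. (\<lambda>t. P n t \<omega>)) UNIV"
    and "\<And>\<omega>. chi \<omega> = Inf {ereal t | t. t \<ge> 0 \<and> hitM (\<lambda>n. P n t \<omega>) = \<infinity>}"
  shows "(\<forall>t\<ge>0. measure M {\<omega> \<in> space M. hitM (\<lambda>n. P n t \<omega>) = \<infinity>} = g2 rho t)
    \<and> chi \<in> borel_measurable M
    \<and> (AE \<omega> in M. chi \<omega> \<noteq> \<infinity>)
    \<and> (\<forall>t\<ge>0. measure M {\<omega> \<in> space M. chi \<omega> \<le> ereal t} = g2 rho t)
    \<and> continuous_on {0..} (g2 rho)
    \<and> (\<forall>x. measure M {\<omega> \<in> space M. chi \<omega> = x} = 0)"
proof -
  interpret S: setting M rho P
    using assms(1-4) by (intro setting.intro setting_axioms.intro) auto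
  have chi: "chi = S.chi'" using assms(5) by (intro ext) (simp add: S.chi'_def)
  show ?thesis
    unfolding chi
    using S.surv_prob S.chi_meas S.chi_AE S.chi_cdf S.chi_atom g2_cont[OF assms(2)]
    by (auto intro!: continuous_at_imp_continuous_on)
qed


end
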